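(* For a positive integer $n$, let $m(n)$ denote the minimal integer $m$ such that there exist subsets $A_1,\ldots,A_m$ of $\{1,\ldots,4n\}$ with $|A_i|=2n$ for each $i$, such that for every subset $B\subseteq\{1,\ldots,4n\}$ with $|B|=2n$ there is at least one $i$, $1\le i\le m$, with $|A_i\cap B|=n$. Then for every prime $p>3$ we have $m(p)\ge p$. *)

theory Defs
  imports "HOL-Computational_Algebra.Primes"
begin

definition good_family :: "nat \<Rightarrow> nat \<Rightarrow> (nat \<Rightarrow> nat set) \<Rightarrow> bool" where
  "good_family n m A \<longleftrightarrow>
     (\<forall>i\<in>{1..m}. A i \<subseteq> {1..4*n} \<and> card (A i) = 2*n) \<and>
     (\<forall>B. B \<subseteq> {1..4*n} \<and> card B = 2*n \<longrightarrow> (\<exists>i\<in>{1..m}. card (A i \<inter> B) = n))"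

definition m_min :: "nat \<Rightarrow> nat" where
  "m_min n = (LEAST m. \<exists>A. good_family n m A)"

end

theory Submission
  imports Defs "HOL-Number_Theory.Number_Theory"
begin

lemma choose_div_lemma:
  assumes p: "prime p" and s: "1 \<le> s" "s \<le> p - 1"
  shows "p dvd ((2*p - 1 - s) choose (p - s))"
proof -
  let ?a = "2*p-1-s" let ?b = "p - s"
  have ba: "?b \<le> ?a" using s by auto
  have e: "fact ?b * fact (?a - ?b) * (?a choose ?b) = (fact ?a :: nat)"
    using binomial_fact_lemma[OF ba] .
  have ab: "?a - ?b = p - 1" using s by auto
  have "p dvd (fact ?a :: nat)" using prime_dvd_fact_iff[OF p] s by auto
  moreover have "\<not> p dvd (fact ?b :: nat)" using prime_dvd_fact_iff[OF p] s by auto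
  moreover have "\<not> p dvd (fact (p-1) :: nat)" using prime_dvd_fact_iff[OF p] s by auto
  ultimately show ?thesis using e ab p by (metis prime_dvd_mult_iff)
qed

lemma central_not_dvd:
  assumes p: "prime p" and p3: "p > 2"
  shows "\<not> p dvd ((2*p - 1) choose p)"
proof
  assume d: "p dvd ((2*p - 1) choose p)"
  have "(\<Sum>k\<le>p. (p choose k)^2) = (2*p) choose p" by (rule choose_square_sum)
  have c1: "[(\<Sum>k\<le>p. (p choose k)^2) = (\<Sum>k\<le>p. (if k = 0 \<or> k = p then 1 else 0))] (mod p)"
  proof (rule cong_sum)
    fix k assume k: "k \<in> {..p}"
    show "[(p choose k)^2 = (if k = 0 \<or> k = p then 1 else 0)] (mod p)"
    proof (cases "k = 0 \<or> k = p")
      case True then show ?thesis by auto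
    next
      case False
      then have "p dvd (p choose k)" using dvd_choose_prime[of k p] k p by auto
      then have "p dvd (p choose k)^2" by (simp add: power2_eq_square)
      then show ?thesis using False by (simp add: cong_0_iff)
    qed
  qed
  have "{..p} \<inter> {k. k = 0 \<or> k = p} = {0, p}" by auto
  then have "(\<Sum>k\<le>p. (if k = 0 \<or> k = p then 1 else 0)::nat) = 2"
    using p3 by (simp add: sum.If_cases)
  have "(2*p) choose p = ((2*p-1) choose (p-1)) + ((2*p-1) choose p)"
    using p3 choose_reduce_nat[of "2*p" p] by auto
  also have "(2*p-1) choose (p-1) = (2*p-1) choose p"
  proof -
    have "(2*p-1) - (p-1) = p" using p3 by arith
    moreover have "p - 1 \<le> 2*p-1" by arith
    ultimately show ?thesis using binomial_symmetric[of "p-1" "2*p-1"] by simp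
  qed
  finally have "(2*p) choose p = 2 * ((2*p-1) choose p)" by simp
  then have "p dvd (2*p) choose p" using d by auto
  then have "[(\<Sum>k\<le>p. (p choose k)^2) = 0] (mod p)"
    using \<open>(\<Sum>k\<le>p. (p choose k)^2) = (2*p) choose p\<close> by (simp add: cong_0_iff)
  then have "[2 = 0] (mod p)"
    using c1 \<open>(\<Sum>k\<le>p. (if k = 0 \<or> k = p then 1 else 0)::nat) = 2\<close>
    by (metis cong_sym cong_trans)
  then have "p dvd 2" by (simp add: cong_0_iff)
  then show False using p3 by (simp add: dvd_imp_le leD)
qed

lemma double_count:
  assumes "finite X" "finite F" "\<forall>S\<in>F. S \<subseteq> X"
  shows "(\<Sum>x\<in>X. card {S\<in>F. x \<in> S}) = (\<Sum>S\<in>F. card S)"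
proof -
  have "(\<Sum>x\<in>X. card {S\<in>F. x \<in> S}) = (\<Sum>x\<in>X. \<Sum>S\<in>F. if x \<in> S then 1 else 0)"
    using assms by (simp add: sum.If_cases Int_def)
  also have "\<dots> = (\<Sum>S\<in>F. \<Sum>x\<in>X. if x \<in> S then 1 else 0)" by (rule sum.swap)
  also have "\<dots> = (\<Sum>S\<in>F. card S)"
  proof (rule sum.cong[OF refl])
    fix S assume "S \<in> F"
    then have "X \<inter> {x. x \<in> S} = S" using assms by auto
    then show "(\<Sum>x\<in>X. if x \<in> S then 1 else 0) = card S"
      using assms by (simp add: sum.If_cases)
  qed
  finally show ?thesis .
qed

lemma hitting:
  assumes "finite X" "\<forall>S\<in>F. S \<subseteq> X \<and> card X \<le> 2 * card S \<and> 0 < card S"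
    "finite F" "card F < 2^c"
  shows "\<exists>H\<subseteq>X. card H \<le> c \<and> (\<forall>S\<in>F. H \<inter> S \<noteq> {})"
  using assms
proof (induction c arbitrary: F)
  case 0
  then show ?case by auto
next
  case (Suc c)
  show ?case
  proof (cases "F = {}")
    case True then show ?thesis by auto
  next
    case False
    then obtain S0 where "S0 \<in> F" by auto
    then have "X \<noteq> {}" using Suc.prems by fastforce
    have "\<exists>x\<in>X. card F \<le> 2 * card {S\<in>F. x \<in> S}"
    proof (rule ccontr)
      assume "\<not> ?thesis"
      then have lt: "\<And>x. x \<in> X \<Longrightarrow> 2 * card {S\<in>F. x \<in> S} < card F" by auto
      have "(\<Sum>x\<in>X. 2 * card {S\<in>F. x \<in> S}) < (\<Sum>x\<in>X. card F)"
        using sum_strict_mono[of X, OF Suc.prems(1) \<open>X \<noteq> {}\<close> lt] by auto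
      also have "\<dots> = (\<Sum>S\<in>F. card X)" by simp
      also have "\<dots> \<le> (\<Sum>S\<in>F. 2 * card S)" using Suc.prems(2) by (intro sum_mono) auto
      also have "\<dots> = 2 * (\<Sum>x\<in>X. card {S\<in>F. x \<in> S})"
        using double_count[OF Suc.prems(1) Suc.prems(3)] Suc.prems(2)
        by (simp add: sum_distrib_left)
      finally show False by (simp add: sum_distrib_left)
    qed
    then obtain x where x: "x \<in> X" "card F \<le> 2 * card {S\<in>F. x \<in> S}" by auto
    let ?F' = "{S\<in>F. x \<notin> S}"
    have "F = {S\<in>F. x \<in> S} \<union> ?F'" by auto
    then have "card F = card {S\<in>F. x \<in> S} + card ?F'"
      using Suc.prems(3) by (metis (no_types, lifting) card_Un_disjoint disjoint_iff
          finite_Un mem_Collect_eq)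
    then have "card ?F' < 2^c" using x Suc.prems(4) by auto
    then obtain H where H: "H \<subseteq> X" "card H \<le> c" "\<forall>S\<in>?F'. H \<inter> S \<noteq> {}"
      using Suc.IH[of ?F'] Suc.prems by auto
    have "finite H" using H(1) Suc.prems(1) finite_subset by auto
    then have "card (insert x H) \<le> Suc c" using H(2) by (simp add: card_insert_if)
    moreover have "\<forall>S\<in>F. insert x H \<inter> S \<noteq> {}" using H(3) by auto
    ultimately show ?thesis using H(1) x(1) by (intro exI[of _ "insert x H"]) auto
  qed
qed


definition GG :: "nat set \<Rightarrow> nat \<Rightarrow> (nat \<Rightarrow> nat set) \<Rightarrow> (nat \<Rightarrow> int) \<Rightarrow> nat set \<Rightarrow> nat \<Rightarrow> int" where
  "GG R p L c S k = (\<Sum>B\<in>{B. B \<subseteq> R \<and> card B = p \<and> S \<subseteq> B}. \<Prod>i<k. (c i + int (card (L i \<inter> B))))"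

lemma GG_Suc:
  assumes R: "finite R" and S: "S \<subseteq> R"
  shows "GG R p L c S (Suc k) = c k * GG R p L c S k + (\<Sum>j\<in>L k \<inter> R. GG R p L c (insert j S) k)"
proof -
  let ?F = "{B. B \<subseteq> R \<and> card B = p \<and> S \<subseteq> B}"
  let ?P = "\<lambda>B. \<Prod>i<k. (c i + int (card (L i \<inter> B)))"
  have fin: "finite ?F" by (rule finite_subset[of _ "Pow R"]) (use R in auto)
  have card_eq: "int (card (L k \<inter> B)) = (\<Sum>j\<in>L k \<inter> R. if j \<in> B then 1 else 0)" if "B \<in> ?F" for B
  proof -
    have "(L k \<inter> R) \<inter> {j. j \<in> B} = L k \<inter> B" using that by auto
    then show ?thesis using R by (simp add: sum.If_cases)
  qed
  have "GG R p L c S (Suc k) = (\<Sum>B\<in>?F. ?P B * (c k + int (card (L k \<inter> B))))"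
    by (simp add: GG_def mult.commute)
  also have "\<dots> = c k * GG R p L c S k + (\<Sum>B\<in>?F. ?P B * int (card (L k \<inter> B)))"
    by (simp add: GG_def algebra_simps sum.distrib sum_distrib_left)
  also have "(\<Sum>B\<in>?F. ?P B * int (card (L k \<inter> B))) = (\<Sum>B\<in>?F. \<Sum>j\<in>L k \<inter> R. if j \<in> B then ?P B else 0)"
    by (rule sum.cong[OF refl]) (simp add: card_eq sum_distrib_left if_distrib cong: if_cong)
  also have "\<dots> = (\<Sum>j\<in>L k \<inter> R. \<Sum>B\<in>?F. if j \<in> B then ?P B else 0)" by (rule sum.swap)
  also have "\<dots> = (\<Sum>j\<in>L k \<inter> R. GG R p L c (insert j S) k)"
  proof (rule sum.cong[OF refl])
    fix j assume j: "j \<in> L k \<inter> R"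
    have "(\<Sum>B\<in>?F. if j \<in> B then ?P B else 0) = (\<Sum>B\<in>{B\<in>?F. j \<in> B}. ?P B)"
      by (rule sum.inter_filter[symmetric, OF fin])
    also have "{B\<in>?F. j \<in> B} = {B. B \<subseteq> R \<and> card B = p \<and> insert j S \<subseteq> B}" by auto
    finally show "(\<Sum>B\<in>?F. if j \<in> B then ?P B else 0) = GG R p L c (insert j S) k"
      by (simp add: GG_def)
  qed
  finally show ?thesis .
qed

lemma count_supersets:
  assumes R: "finite R" and S: "S \<subseteq> R" "card S \<le> p"
  shows "card {B. B \<subseteq> R \<and> card B = p \<and> S \<subseteq> B} = (card R - card S) choose (p - card S)"
proof -
  have fS: "finite S" using R S finite_subset by auto
  let ?C = "{C. C \<subseteq> R - S \<and> card C = p - card S}"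
  have img: "{B. B \<subseteq> R \<and> card B = p \<and> S \<subseteq> B} = (\<lambda>C. C \<union> S) ` ?C"
  proof
    show "{B. B \<subseteq> R \<and> card B = p \<and> S \<subseteq> B} \<subseteq> (\<lambda>C. C \<union> S) ` ?C"
    proof
      fix B assume B: "B \<in> {B. B \<subseteq> R \<and> card B = p \<and> S \<subseteq> B}"
      then have "finite B" using R finite_subset by auto
      then have "card (B - S) = p - card S" using B by (simp add: card_Diff_subset fS)
      moreover have "B = (B - S) \<union> S" using B by auto
      moreover have "B - S \<subseteq> R - S" using B by auto
      ultimately show "B \<in> (\<lambda>C. C \<union> S) ` ?C" by (intro image_eqI[of _ _ "B - S"]) auto
    qed
  next
    show "(\<lambda>C. C \<union> S) ` ?C \<subseteq> {B. B \<subseteq> R \<and> card B = p \<and> S \<subseteq> B}"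
    proof
      fix B assume "B \<in> (\<lambda>C. C \<union> S) ` ?C"
      then obtain C where C: "C \<subseteq> R - S" "card C = p - card S" "B = C \<union> S" by auto
      have "finite C" using C R finite_subset by blast
      moreover have "C \<inter> S = {}" using C by auto
      ultimately have "card B = card C + card S" using C fS by (simp add: card_Un_disjoint)
      then show "B \<in> {B. B \<subseteq> R \<and> card B = p \<and> S \<subseteq> B}" using C S by auto
    qed
  qed
  have inj: "inj_on (\<lambda>C. C \<union> S) ?C"
  proof (rule inj_onI)
    fix C1 C2 assume a: "C1 \<in> ?C" "C2 \<in> ?C" "C1 \<union> S = C2 \<union> S"
    have "C1 = (C1 \<union> S) - S" "C2 = (C2 \<union> S) - S" using a(1,2) by auto
    then show "C1 = C2" using a(3) by simp
  qed
  have "card {B. B \<subseteq> R \<and> card B = p \<and> S \<subseteq> B} = card ?C" unfolding img by (rule card_image[OF inj])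
  also have "\<dots> = card (R - S) choose (p - card S)" by (rule n_subsets) (use R in simp)
  finally show ?thesis using card_Diff_subset[OF fS S(1)] by simp
qed

lemma GG_nonempty:
  assumes p: "prime p" and R: "finite R" "card R = 2*p - 1"
  shows "\<forall>S. S \<subseteq> R \<longrightarrow> S \<noteq> {} \<longrightarrow> card S + k \<le> p - 1 \<longrightarrow> int p dvd GG R p L c S k"
proof (induction k)
  case 0
  show ?case
  proof (intro allI impI)
    fix S assume S: "S \<subseteq> R" "S \<noteq> {}" "card S + 0 \<le> p - 1"
    have "finite S" using S R finite_subset by auto
    then have s1: "1 \<le> card S" using S by (simp add: Suc_leI card_gt_0_iff)
    have "GG R p L c S 0 = int (card {B. B \<subseteq> R \<and> card B = p \<and> S \<subseteq> B})" by (simp add: GG_def)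
    also have "\<dots> = int ((2*p - 1 - card S) choose (p - card S))"
      using count_supersets[OF R(1) S(1)] S(3) R(2) by auto
    finally show "int p dvd GG R p L c S 0"
      using choose_div_lemma[OF p s1] S(3) by simp
  qed
next
  case (Suc k)
  show ?case
  proof (intro allI impI)
    fix S assume S: "S \<subseteq> R" "S \<noteq> {}" "card S + Suc k \<le> p - 1"
    have fS: "finite S" using S R finite_subset by auto
    have "int p dvd GG R p L c S k" using Suc.IH S by auto
    moreover have "int p dvd GG R p L c (insert j S) k" if "j \<in> L k \<inter> R" for j
    proof -
      have "card (insert j S) \<le> Suc (card S)" using fS by (simp add: card_insert_if)
      then show ?thesis using Suc.IH that S by auto
    qed
    ultimately show "int p dvd GG R p L c S (Suc k)"
      unfolding GG_Suc[OF R(1) S(1)] by (intro dvd_add dvd_mult dvd_sum) auto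
  qed
qed

lemma GG_empty:
  assumes p: "prime p" and R: "finite R" "card R = 2*p - 1"
  shows "k \<le> p - 1 \<Longrightarrow> int p dvd (GG R p L c {} k - int ((2*p-1) choose p) * (\<Prod>i<k. c i))"
proof (induction k)
  case 0
  have "GG R p L c {} 0 = int (card {B. B \<subseteq> R \<and> card B = p})" by (simp add: GG_def)
  also have "\<dots> = int ((2*p-1) choose p)" using n_subsets[OF R(1)] R(2) by simp
  finally show ?case by simp
next
  case (Suc k)
  have h: "int p dvd (GG R p L c {} k - int ((2*p-1) choose p) * (\<Prod>i<k. c i))" using Suc by auto
  have h2: "int p dvd GG R p L c {j} k" if "j \<in> L k \<inter> R" for j
    using GG_nonempty[OF p R, of k L c] that Suc.prems by auto
  have "GG R p L c {} (Suc k) - int ((2*p-1) choose p) * (\<Prod>i<Suc k. c i)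
     = c k * (GG R p L c {} k - int ((2*p-1) choose p) * (\<Prod>i<k. c i)) + (\<Sum>j\<in>L k \<inter> R. GG R p L c {j} k)"
    using GG_Suc[OF R(1), of "{}" p L c k] by (simp add: algebra_simps)
  also have "int p dvd \<dots>" using h h2 by (intro dvd_add dvd_mult dvd_sum) auto
  finally show ?case .
qed


lemma good_exists: "\<exists>m A. good_family n m A"
proof -
  let ?X = "{S. S \<subseteq> {1..4*n} \<and> card S = 2*n}"
  have fX: "finite ?X" by (rule finite_subset[of _ "Pow {1..4*n}"]) auto
  obtain h where h: "bij_betw h {1..card ?X} ?X" using ex_bij_betw_nat_finite_1[OF fX] by auto
  have "good_family n (card ?X) h"
    unfolding good_family_def
  proof (rule conjI; intro ballI allI impI)
    fix i assume "i \<in> {1..card ?X}"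
    then have "h i \<in> ?X" using h bij_betwE by blast
    then show "h i \<subseteq> {1..4*n} \<and> card (h i) = 2*n" by auto
  next
    fix B assume B: "B \<subseteq> {1..4*n} \<and> card B = 2*n"
    obtain C where C: "C \<subseteq> B" "card C = n" "finite C"
      using obtain_subset_with_card_n[of n B] B by auto
    have fB: "finite B" using B finite_subset by auto
    have cc: "card ({1..4*n} - B) = 2*n" using B card_Diff_subset[OF fB] by auto
    obtain D where D: "D \<subseteq> {1..4*n} - B" "card D = n" "finite D"
      using obtain_subset_with_card_n[of n "{1..4*n} - B"] cc by auto
    have "C \<inter> D = {}" using C D by auto
    then have "card (C \<union> D) = 2*n" using C D by (simp add: card_Un_disjoint)
    moreover have "(C \<union> D) \<inter> B = C" using C D by auto
    moreover have "C \<union> D \<subseteq> {1..4*n}" using C D B by auto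
    ultimately have cd: "C \<union> D \<in> ?X" "card ((C \<union> D) \<inter> B) = n" using C by auto
    have "h ` {1..card ?X} = ?X" using h by (simp add: bij_betw_def)
    then obtain i where "i \<in> {1..card ?X}" "h i = C \<union> D" using cd(1)
      by (metis (no_types, lifting) imageE)
    then show "\<exists>i\<in>{1..card ?X}. card (h i \<inter> B) = n" using cd(2) by metis
  qed
  then show ?thesis by blast
qed

lemma main_lemma:
  assumes p: "prime p" "p > 3" and m: "m < p" and g: "good_family p m A"
  shows False
proof -
  let ?X = "{1..4*p}"
  have fX: "finite ?X" by simp
  have hA: "\<And>i. i \<in> {1..m} \<Longrightarrow> A i \<subseteq> ?X \<and> card (A i) = 2*p"
    using g unfolding good_family_def by auto
  have hB: "\<And>B. B \<subseteq> ?X \<Longrightarrow> card B = 2*p \<Longrightarrow> \<exists>i\<in>{1..m}. card (A i \<inter> B) = p"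
    using g unfolding good_family_def by auto
  let ?F = "A ` {1..m} \<union> (\<lambda>i. ?X - A i) ` {1..m}"
  have fF: "finite ?F" by simp
  have "card ?F \<le> card (A ` {1..m}) + card ((\<lambda>i. ?X - A i) ` {1..m})" by (rule card_Un_le)
  also have "\<dots> \<le> m + m"
    using card_image_le[of "{1..m}" A] card_image_le[of "{1..m}" "\<lambda>i. ?X - A i"] by simp
  also have "\<dots> < 2^p"
  proof -
    have "p - 1 < 2^(p-1)" by (rule less_exp)
    then have "2*(p-1) < 2*2^(p-1)" by simp
    also have "p = Suc (p - 1)" using p by simp
    then have "2*2^(p-1) = (2::nat)^p" by (metis power_Suc)
    finally show ?thesis using m by simp
  qed
  finally have cF: "card ?F < 2^p" .
  have propF: "\<forall>S\<in>?F. S \<subseteq> ?X \<and> card ?X \<le> 2 * card S \<and> 0 < card S"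
  proof
    fix S assume "S \<in> ?F"
    then obtain i where i: "i \<in> {1..m}" "S = A i \<or> S = ?X - A i" by auto
    have fAi: "finite (A i)" using hA[OF i(1)] finite_subset fX by blast
    have "card (?X - A i) = 2*p" using hA[OF i(1)] card_Diff_subset[OF fAi] by simp
    then show "S \<subseteq> ?X \<and> card ?X \<le> 2 * card S \<and> 0 < card S" using i hA[OF i(1)] p by auto
  qed
  obtain H where H: "H \<subseteq> ?X" "card H \<le> p" "\<forall>S\<in>?F. H \<inter> S \<noteq> {}"
    using hitting[OF fX propF fF cF] by auto
  have fH: "finite H" using H(1) finite_subset by auto
  have "card (?X - H) = 4*p - card H" using card_Diff_subset[OF fH H(1)] by simp
  then have le: "p - card H \<le> card (?X - H)" using H(2) by simp
  obtain E where E: "E \<subseteq> ?X - H" "card E = p - card H" "finite E"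
    using obtain_subset_with_card_n[OF le] by blast
  define T where "T = H \<union> E"
  have "H \<inter> E = {}" using E by auto
  then have cT: "card T = p" unfolding T_def using fH E H(2) by (simp add: card_Un_disjoint)
  have T: "T \<subseteq> ?X" "finite T" using E H fH unfolding T_def by auto
  have meet: "1 \<le> card (A i \<inter> T) \<and> card (A i \<inter> T) < p" if i: "i \<in> {1..m}" for i
  proof -
    have "H \<inter> A i \<noteq> {}" "H \<inter> (?X - A i) \<noteq> {}" using H(3) i by auto
    then have ne: "A i \<inter> T \<noteq> {}" and nsub: "\<not> T \<subseteq> A i" unfolding T_def by auto
    have "card (A i \<inter> T) \<noteq> 0" using ne T(2) by simp
    moreover have "A i \<inter> T \<subset> T" using nsub by auto
    then have "card (A i \<inter> T) < card T" using T(2) psubset_card_mono by blast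
    ultimately show ?thesis using cT by auto
  qed
  have "card (?X - T) = 3*p" using card_Diff_subset[OF T(2) T(1)] cT by simp
  then have le2: "2*p-1 \<le> card (?X - T)" by simp
  obtain R where R: "R \<subseteq> ?X - T" "card R = 2*p - 1" "finite R"
    using obtain_subset_with_card_n[OF le2] by blast
  define L where "L = (\<lambda>i. A (Suc i))"
  define c where "c = (\<lambda>i. int (card (A (Suc i) \<inter> T)) - int p)"
  have zero: "GG R p L c {} m = 0"
    unfolding GG_def
  proof (rule sum.neutral, rule ballI)
    fix B assume "B \<in> {B. B \<subseteq> R \<and> card B = p \<and> {} \<subseteq> B}"
    then have B: "B \<subseteq> R" "card B = p" by auto
    have fB: "finite B" using B R(3) finite_subset by auto
    have dj: "B \<inter> T = {}" using B R by auto
    have "card (B \<union> T) = 2*p" using dj fB T cT B by (simp add: card_Un_disjoint)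
    moreover have "B \<union> T \<subseteq> ?X" using B R T by auto
    ultimately obtain i where i: "i \<in> {1..m}" "card (A i \<inter> (B \<union> T)) = p" using hB by blast
    have "A i \<inter> (B \<union> T) = (A i \<inter> T) \<union> (A i \<inter> B)" by auto
    moreover have "(A i \<inter> T) \<inter> (A i \<inter> B) = {}" using dj by auto
    ultimately have "card (A i \<inter> T) + card (A i \<inter> B) = p"
      using i(2) fB T(2) by (simp add: card_Un_disjoint)
    moreover have "Suc (i - 1) = i" using i(1) by auto
    ultimately have "c (i - 1) + int (card (L (i - 1) \<inter> B)) = 0"
      by (simp add: c_def L_def)
    moreover have "i - 1 \<in> {..<m}" using i(1) by auto
    ultimately show "(\<Prod>j<m. c j + int (card (L j \<inter> B))) = 0"
      by (simp add: prod_zero_iff) blast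
  qed
  have "int p dvd (GG R p L c {} m - int ((2*p-1) choose p) * (\<Prod>i<m. c i))"
    using GG_empty[OF p(1) R(3) R(2)] m by auto
  then have d1: "int p dvd int ((2*p-1) choose p) * (\<Prod>i<m. c i)" using zero by simp
  have pp: "prime (int p)" using p by simp
  have n1: "\<not> int p dvd int ((2*p-1) choose p)" using central_not_dvd[OF p(1)] p(2) by simp
  have n2: "\<not> int p dvd (\<Prod>i<m. c i)"
  proof
    assume "int p dvd (\<Prod>i<m. c i)"
    then obtain i where i: "i < m" "int p dvd c i"
      using prime_dvd_prod_iff[of "{..<m}" "int p" c] pp by auto
    then have "int p dvd c i + int p" by simp
    then have "int p dvd int (card (A (Suc i) \<inter> T))" unfolding c_def by simp
    then have "p dvd card (A (Suc i) \<inter> T)" by simp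
    moreover have "1 \<le> card (A (Suc i) \<inter> T) \<and> card (A (Suc i) \<inter> T) < p" using meet i by auto
    ultimately show False using dvd_imp_le by fastforce
  qed
  show False using d1 n1 n2 pp prime_dvd_mult_iff by blast
qed

theorem theorem2:
  fixes p :: nat
  assumes "prime p" and "p > 3"
  shows "m_min p \<ge> p"
proof (rule ccontr)
  assume a: "\<not> m_min p \<ge> p"
  have "\<exists>m A. good_family p m A" by (rule good_exists)
  then have "\<exists>A. good_family p (m_min p) A" unfolding m_min_def by (rule LeastI_ex)
  then obtain A where "good_family p (m_min p) A" by auto
  then show False using main_lemma[OF assms, of "m_min p" A] a by (simp add: not_le)
qed

end
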